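(* Let $q_1,q_2\in\mathbb{Z}$, $X$ a nonempty finite set and $f\in\mathrm{Bool}(X)$. There exists an ordered sequence $(X_1,\ldots,X_k)$ of nonempty pairwise disjoint subsets of $X$ with union $X$ such that each $f_{\mid X_i}$ is $(q_1,q_2)$-indecomposable and $f=f_{\mid X_1}\star_{q_1,q_2}\cdots\star_{q_1,q_2}f_{\mid X_k}$. Moreover, if $(Y_1,\ldots,Y_l)$ is another such sequence with the same two properties, then $k=l$ and there exists a permutation $\sigma$ of $\{1,\ldots,k\}$ with $Y_i=X_{\sigma(i)}$ for all $i$.
   Context: For a finite set $X$, a boolean function on $X$ is a map $f:\mathcal{P}(X)\to\mathbb{Z}$ with $f(\emptyset)=0$; $\mathrm{Bool}(X)$ is the set of these. Throughout, $0^0=1$. For disjoint finite sets $X,Y$, $f\in\mathrm{Bool}(X)$, $g\in\mathrm{Bool}(Y)$, $(f\star_{q_1,q_2}g)(A)=q_1^{|A\cap Y|}f(A\cap X)+q_2^{|A\cap X|}g(A\cap Y)$ for $A\subseteq X\sqcup Y$; this product is associative. For $Y\subseteq X$, $f_{\mid Y}\in\mathrm{Bool}(Y)$ denotes the restriction of $f$ to $\mathcal{P}(Y)$. For $X$ nonempty, $f\in\mathrm{Bool}(X)$ is $(q_1,q_2)$-indecomposable if whenever $Y\subseteq X$, $f'\in\mathrm{Bool}(X\setminus Y)$, $f''\in\mathrm{Bool}(Y)$ and $f=f'\star_{q_1,q_2}f''$, then $Y=\emptyset$ or $Y=X$. *)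

theory Defs
  imports Main
begin

text \<open>Boolean functions on a finite set X are represented as functions
  'a set => int that vanish on the empty set and outside the powerset of X
  (extensional representation, so that equality of boolean functions is
  equality of HOL functions).\<close>

definition Bool :: "'a set \<Rightarrow> ('a set \<Rightarrow> int) set" where
  "Bool X = {f. f {} = 0 \<and> (\<forall>A. \<not> A \<subseteq> X \<longrightarrow> f A = 0)}"

definition restr :: "('a set \<Rightarrow> int) \<Rightarrow> 'a set \<Rightarrow> ('a set \<Rightarrow> int)" where
  "restr f Y = (\<lambda>A. if A \<subseteq> Y then f A else 0)"

text \<open>The product of f in Bool X and g in Bool Y (X, Y disjoint).
  Note Isabelle has 0 ^ 0 = 1.\<close>
definition star :: "int \<Rightarrow> int \<Rightarrow> 'a set \<Rightarrow> 'a set \<Rightarrow> ('a set \<Rightarrow> int) \<Rightarrow> ('a set \<Rightarrow> int)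
    \<Rightarrow> ('a set \<Rightarrow> int)" where
  "star q1 q2 X Y f g = (\<lambda>A. if A \<subseteq> X \<union> Y
      then q1 ^ card (A \<inter> Y) * f (A \<inter> X) + q2 ^ card (A \<inter> X) * g (A \<inter> Y)
      else 0)"

definition indecomposable :: "int \<Rightarrow> int \<Rightarrow> 'a set \<Rightarrow> ('a set \<Rightarrow> int) \<Rightarrow> bool" where
  "indecomposable q1 q2 X f \<longleftrightarrow> X \<noteq> {} \<and>
     (\<forall>Y f' f''. Y \<subseteq> X \<and> f' \<in> Bool (X - Y) \<and> f'' \<in> Bool Y \<and>
        f = star q1 q2 (X - Y) Y f' f'' \<longrightarrow> Y = {} \<or> Y = X)"

text \<open>Iterated product f|X1 * (f|X2 * ( ... * f|Xk)) (the product is associative);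
  the empty product is the zero function, the unique element of Bool {}.\<close>
fun prodseq :: "int \<Rightarrow> int \<Rightarrow> ('a set \<Rightarrow> int) \<Rightarrow> 'a set list \<Rightarrow> ('a set \<Rightarrow> int)" where
  "prodseq q1 q2 f [] = (\<lambda>A. 0)"
| "prodseq q1 q2 f (Xi # Xs) = star q1 q2 Xi (\<Union> (set Xs)) (restr f Xi) (prodseq q1 q2 f Xs)"

definition good_decomp :: "int \<Rightarrow> int \<Rightarrow> 'a set \<Rightarrow> ('a set \<Rightarrow> int) \<Rightarrow> 'a set list \<Rightarrow> bool" where
  "good_decomp q1 q2 X f Xs \<longleftrightarrow>
     (\<forall>i<length Xs. Xs ! i \<noteq> {} \<and> Xs ! i \<subseteq> X) \<and>
     (\<forall>i<length Xs. \<forall>j<length Xs. i \<noteq> j \<longrightarrow> Xs ! i \<inter> Xs ! j = {}) \<and>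
     \<Union> (set Xs) = X \<and>
     (\<forall>i<length Xs. indecomposable q1 q2 (Xs ! i) (restr f (Xs ! i))) \<and>
     f = prodseq q1 q2 f Xs"

end

theory Submission
  imports Defs
begin

definition pd :: "'a set list \<Rightarrow> bool" where
  "pd Xs \<longleftrightarrow> (\<forall>i<length Xs. \<forall>j<length Xs. i \<noteq> j \<longrightarrow> Xs ! i \<inter> Xs ! j = {})"

lemma pd_Cons: "pd (X # Xs) \<longleftrightarrow> pd Xs \<and> X \<inter> \<Union>(set Xs) = {}"
proof
  assume a: "pd (X # Xs)"
  have "pd Xs" unfolding pd_def
  proof (intro allI impI)
    fix i j assume "i < length Xs" "j < length Xs" "i \<noteq> j"
    then show "Xs ! i \<inter> Xs ! j = {}" using a[unfolded pd_def, rule_format, of "Suc i" "Suc j"] by simp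
  qed
  moreover have "X \<inter> Z = {}" if Z: "Z \<in> set Xs" for Z
  proof -
    obtain k where k: "k < length Xs" "Xs ! k = Z" using Z by (auto simp: in_set_conv_nth)
    have "(X # Xs) ! 0 \<inter> (X # Xs) ! (Suc k) = {}"
      using a k(1) unfolding pd_def by (metis Zero_not_Suc length_Cons zero_less_Suc Suc_mono)
    then show ?thesis using k by simp
  qed
  ultimately show "pd Xs \<and> X \<inter> \<Union>(set Xs) = {}" by blast
next
  assume a: "pd Xs \<and> X \<inter> \<Union>(set Xs) = {}"
  show "pd (X # Xs)" unfolding pd_def
  proof (intro allI impI)
    fix i j assume ij: "i < length (X # Xs)" "j < length (X # Xs)" "i \<noteq> j"
    show "(X # Xs) ! i \<inter> (X # Xs) ! j = {}"
    proof (cases i)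
      case 0
      then obtain k where k: "j = Suc k" using ij by (cases j) auto
      then have "k < length Xs" using ij by simp
      then have "Xs ! k \<subseteq> \<Union>(set Xs)" using nth_mem by blast
      then have "X \<inter> Xs ! k = {}" using a by blast
      then show ?thesis using 0 k by simp
    next
      case (Suc i')
      show ?thesis
      proof (cases j)
        case 0
        have "i' < length Xs" using ij Suc by simp
        then have "Xs ! i' \<subseteq> \<Union>(set Xs)" using nth_mem by blast
        then have "Xs ! i' \<inter> X = {}" using a by blast
        then show ?thesis using 0 Suc by simp
      next
        case (Suc j')
        then have "i' < length Xs" "j' < length Xs" "i' \<noteq> j'" using \<open>i = Suc i'\<close> ij by auto
        then have "Xs ! i' \<inter> Xs ! j' = {}" using a unfolding pd_def by blast
        then show ?thesis using \<open>i = Suc i'\<close> Suc by simp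
      qed
    qed
  qed
qed

lemma pd_append: "pd Xs \<Longrightarrow> pd Ys \<Longrightarrow> \<Union>(set Xs) \<inter> \<Union>(set Ys) = {} \<Longrightarrow> pd (Xs @ Ys)"
  by (induction Xs) (auto simp: pd_Cons)

lemma pd_drop: "pd Xs \<Longrightarrow> pd (drop i Xs)"
  unfolding pd_def by auto

lemma pd_disj: "pd Xs \<Longrightarrow> A \<in> set Xs \<Longrightarrow> B \<in> set Xs \<Longrightarrow> A \<noteq> B \<Longrightarrow> A \<inter> B = {}"
  unfolding pd_def in_set_conv_nth by blast

lemma prodseq_out: "\<not> A \<subseteq> \<Union>(set Xs) \<Longrightarrow> prodseq q1 q2 f Xs A = 0"
  by (cases Xs) (auto simp: star_def)

lemma prodseq_tail:
  assumes "f {} = 0" "X \<inter> \<Union>(set Xs) = {}" "A \<subseteq> \<Union>(set Xs)"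
  shows "prodseq q1 q2 f (X # Xs) A = prodseq q1 q2 f Xs A"
proof -
  have "A \<inter> X = {}" "A \<inter> \<Union>(set Xs) = A" using assms by auto
  then show ?thesis using assms by (auto simp: star_def restr_def)
qed

lemma prodseq_drop:
  assumes "f {} = 0" "pd Xs" "A \<subseteq> \<Union>(set (drop i Xs))"
  shows "prodseq q1 q2 f Xs A = prodseq q1 q2 f (drop i Xs) A"
  using assms(2,3)
proof (induction Xs arbitrary: i)
  case Nil
  then show ?case by simp
next
  case (Cons X Xs)
  show ?case
  proof (cases i)
    case 0
    then show ?thesis by simp
  next
    case (Suc k)
    have A: "A \<subseteq> \<Union>(set (drop k Xs))" using Cons.prems Suc by simp
    have "A \<subseteq> \<Union>(set Xs)" using A set_drop_subset[of k Xs] by blast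
    then have "prodseq q1 q2 f (X # Xs) A = prodseq q1 q2 f Xs A"
      using prodseq_tail[where f=f, OF assms(1)] Cons.prems by (simp add: pd_Cons)
    also have "\<dots> = prodseq q1 q2 f (drop k Xs) A"
      using Cons.IH[OF _ A] Cons.prems by (simp add: pd_Cons)
    finally show ?thesis using Suc by simp
  qed
qed

lemma star_assoc:
  assumes "finite X" "finite Y" "finite Z" "X \<inter> Y = {}" "X \<inter> Z = {}" "Y \<inter> Z = {}"
  shows "star q1 q2 X (Y \<union> Z) a (star q1 q2 Y Z b c) = star q1 q2 (X \<union> Y) Z (star q1 q2 X Y a b) c"
proof
  fix A
  show "star q1 q2 X (Y \<union> Z) a (star q1 q2 Y Z b c) A = star q1 q2 (X \<union> Y) Z (star q1 q2 X Y a b) c A"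
  proof (cases "A \<subseteq> X \<union> Y \<union> Z")
    case True
    have fin: "finite (A \<inter> X)" "finite (A \<inter> Y)" "finite (A \<inter> Z)" using assms by auto
    have u1: "A \<inter> (Y \<union> Z) = (A \<inter> Y) \<union> (A \<inter> Z)" "A \<inter> (X \<union> Y) = (A \<inter> X) \<union> (A \<inter> Y)" by blast+
    have d: "(A \<inter> Y) \<inter> (A \<inter> Z) = {}" "(A \<inter> X) \<inter> (A \<inter> Y) = {}" using assms by blast+
    have c1: "card (A \<inter> (Y \<union> Z)) = card (A \<inter> Y) + card (A \<inter> Z)"
      unfolding u1 using card_Un_disjoint[OF fin(2,3) d(1)] .
    have c2: "card (A \<inter> (X \<union> Y)) = card (A \<inter> X) + card (A \<inter> Y)"
      unfolding u1 using card_Un_disjoint[OF fin(1,2) d(2)] .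
    have e1: "A \<inter> (Y \<union> Z) \<inter> Y = A \<inter> Y" "A \<inter> (Y \<union> Z) \<inter> Z = A \<inter> Z"
      "A \<inter> (X \<union> Y) \<inter> Y = A \<inter> Y" "A \<inter> (X \<union> Y) \<inter> X = A \<inter> X" using assms by auto
    have s1: "A \<inter> (Y \<union> Z) \<subseteq> Y \<union> Z" "A \<inter> (X \<union> Y) \<subseteq> X \<union> Y" "A \<subseteq> X \<union> (Y \<union> Z)" "A \<subseteq> X \<union> Y \<union> Z"
      using True by auto
    define cX where "cX = card (A \<inter> X)"
    define cY where "cY = card (A \<inter> Y)"
    define cZ where "cZ = card (A \<inter> Z)"
    have L: "star q1 q2 X (Y \<union> Z) a (star q1 q2 Y Z b c) A
       = q1 ^ (cY + cZ) * a (A \<inter> X) + q2 ^ cX * (q1 ^ cZ * b (A \<inter> Y) + q2 ^ cY * c (A \<inter> Z))"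
      unfolding star_def cX_def cY_def cZ_def c1[symmetric]
      by (simp only: if_P[OF s1(3)] if_P[OF s1(1)] e1)
    have R: "star q1 q2 (X \<union> Y) Z (star q1 q2 X Y a b) c A
       = q1 ^ cZ * (q1 ^ cY * a (A \<inter> X) + q2 ^ cX * b (A \<inter> Y)) + q2 ^ (cX + cY) * c (A \<inter> Z)"
      unfolding star_def cX_def cY_def cZ_def c2[symmetric]
      by (simp only: if_P[OF s1(4)] if_P[OF s1(2)] e1)
    show ?thesis unfolding L R by (simp add: power_add algebra_simps)
  next
    case False
    then show ?thesis by (auto simp: star_def)
  qed
qed


lemma prodseq_append:
  assumes "pd Xs1" "\<Union>(set Xs1) \<inter> \<Union>(set Xs2) = {}" "\<forall>Z\<in>set (Xs1 @ Xs2). finite Z"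
  shows "prodseq q1 q2 f (Xs1 @ Xs2) = star q1 q2 (\<Union>(set Xs1)) (\<Union>(set Xs2)) (prodseq q1 q2 f Xs1) (prodseq q1 q2 f Xs2)"
  using assms
proof (induction Xs1)
  case Nil
  show ?case
  proof
    fix A
    show "prodseq q1 q2 f ([] @ Xs2) A = star q1 q2 (\<Union>(set [])) (\<Union>(set Xs2)) (prodseq q1 q2 f []) (prodseq q1 q2 f Xs2) A"
      using prodseq_out[of A Xs2 q1 q2 f] by (auto simp: star_def Int_absorb2)
  qed
next
  case (Cons X Xs1)
  have h: "pd Xs1" "X \<inter> \<Union>(set Xs1) = {}" using Cons.prems(1) by (auto simp: pd_Cons)
  have IH: "prodseq q1 q2 f (Xs1 @ Xs2) = star q1 q2 (\<Union>(set Xs1)) (\<Union>(set Xs2)) (prodseq q1 q2 f Xs1) (prodseq q1 q2 f Xs2)"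
    using Cons.IH h Cons.prems by auto
  have fin: "finite X" "finite (\<Union>(set Xs1))" "finite (\<Union>(set Xs2))" using Cons.prems(3) by auto
  have d: "X \<inter> \<Union>(set Xs2) = {}" "\<Union>(set Xs1) \<inter> \<Union>(set Xs2) = {}" using Cons.prems(2) by auto
  have "prodseq q1 q2 f ((X # Xs1) @ Xs2) = star q1 q2 X (\<Union>(set Xs1) \<union> \<Union>(set Xs2)) (restr f X) (prodseq q1 q2 f (Xs1 @ Xs2))"
    by simp
  also have "\<dots> = star q1 q2 (X \<union> \<Union>(set Xs1)) (\<Union>(set Xs2)) (star q1 q2 X (\<Union>(set Xs1)) (restr f X) (prodseq q1 q2 f Xs1)) (prodseq q1 q2 f Xs2)"
    unfolding IH by (rule star_assoc[OF fin h(2) d])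
  finally show ?case by simp
qed

lemma prodseq_restr_cong: "\<forall>Z\<in>set Xs. Z \<subseteq> Y \<Longrightarrow> prodseq q1 q2 (restr f Y) Xs = prodseq q1 q2 f Xs"
proof (induction Xs)
  case Nil
  then show ?case by simp
next
  case (Cons X Xs)
  have "restr (restr f Y) X = restr f X" using Cons.prems by (auto simp: restr_def fun_eq_iff)
  then show ?case using Cons by simp
qed

lemma restr_Bool: "f {} = 0 \<Longrightarrow> restr f Y \<in> Bool Y"
  by (auto simp: Bool_def restr_def)

lemma restr_restr: "Z \<subseteq> Y \<Longrightarrow> restr (restr f Y) Z = restr f Z"
  by (auto simp: restr_def fun_eq_iff)

lemma decomp_restr:
  assumes "f' \<in> Bool (X - Y)" "f'' \<in> Bool Y" "f = star q1 q2 (X - Y) Y f' f''"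
  shows "f' = restr f (X - Y)" "f'' = restr f Y"
proof -
  show "f' = restr f (X - Y)"
  proof
    fix A show "f' A = restr f (X - Y) A"
    proof (cases "A \<subseteq> X - Y")
      case True
      then have "A \<inter> Y = {}" "A \<inter> (X - Y) = A" "A \<subseteq> X - Y \<union> Y" by auto
      then show ?thesis using True assms by (simp add: star_def restr_def Bool_def)
    next
      case False
      then show ?thesis using assms(1) by (simp add: restr_def Bool_def)
    qed
  qed
  show "f'' = restr f Y"
  proof
    fix A show "f'' A = restr f Y A"
    proof (cases "A \<subseteq> Y")
      case True
      then have "A \<inter> (X - Y) = {}" "A \<inter> Y = A" "A \<subseteq> X - Y \<union> Y" by auto
      then show ?thesis using True assms by (simp add: star_def restr_def Bool_def)
    next
      case False
      then show ?thesis using assms(2) by (simp add: restr_def Bool_def)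
    qed
  qed
qed

lemma good_decomp_alt:
  "good_decomp q1 q2 X f Xs \<longleftrightarrow>
     (\<forall>Z\<in>set Xs. Z \<noteq> {} \<and> Z \<subseteq> X \<and> indecomposable q1 q2 Z (restr f Z)) \<and> pd Xs \<and>
     \<Union>(set Xs) = X \<and> f = prodseq q1 q2 f Xs"
  unfolding good_decomp_def pd_def by (auto simp: in_set_conv_nth) (metis nth_mem)+

lemma existence:
  assumes "finite X" "X \<noteq> {}" "f \<in> Bool X"
  shows "\<exists>Xs. good_decomp q1 q2 X f Xs"
  using assms
proof (induction X arbitrary: f rule: finite_psubset_induct)
  case (psubset X)
  have f0: "f {} = 0" using psubset.prems by (simp add: Bool_def)
  have rX: "restr f X = f" using psubset.prems by (auto simp: Bool_def restr_def)
  show ?case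
  proof (cases "indecomposable q1 q2 X f")
    case True
    have "prodseq q1 q2 f [X] = f"
    proof
      fix A show "prodseq q1 q2 f [X] A = f A"
        using psubset.prems by (auto simp: star_def restr_def Bool_def Int_absorb2)
    qed
    then have "good_decomp q1 q2 X f [X]" using True psubset.prems rX
      by (simp add: good_decomp_alt pd_def)
    then show ?thesis by blast
  next
    case False
    then obtain Y f' f'' where Y: "Y \<subseteq> X" "f' \<in> Bool (X - Y)" "f'' \<in> Bool Y"
      "f = star q1 q2 (X - Y) Y f' f''" "Y \<noteq> {}" "Y \<noteq> X"
      using psubset.prems unfolding indecomposable_def by blast
    have e: "f' = restr f (X - Y)" "f'' = restr f Y" using decomp_restr[OF Y(2,3,4)] by auto
    have ps: "X - Y \<subset> X" "Y \<subset> X" "X - Y \<noteq> {}" using Y by auto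
    obtain Xs1 where X1: "good_decomp q1 q2 (X - Y) (restr f (X - Y)) Xs1"
      using psubset.IH[OF ps(1) ps(3) restr_Bool[where f=f, OF f0]] by blast
    obtain Xs2 where X2: "good_decomp q1 q2 Y (restr f Y) Xs2"
      using psubset.IH[OF ps(2) Y(5) restr_Bool[where f=f, OF f0]] by blast
    have A1: "\<forall>Z\<in>set Xs1. Z \<noteq> {} \<and> Z \<subseteq> X - Y \<and> indecomposable q1 q2 Z (restr f Z)" "pd Xs1"
      "\<Union>(set Xs1) = X - Y" "restr f (X - Y) = prodseq q1 q2 f Xs1"
      using X1 unfolding good_decomp_alt by (auto simp: restr_restr prodseq_restr_cong)
    have A2: "\<forall>Z\<in>set Xs2. Z \<noteq> {} \<and> Z \<subseteq> Y \<and> indecomposable q1 q2 Z (restr f Z)" "pd Xs2"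
      "\<Union>(set Xs2) = Y" "restr f Y = prodseq q1 q2 f Xs2"
      using X2 unfolding good_decomp_alt by (auto simp: restr_restr prodseq_restr_cong)
    have fin: "\<forall>Z\<in>set (Xs1 @ Xs2). finite Z" using A1(1) A2(1) psubset.hyps Y(1)
      by (metis Diff_subset Un_iff finite_subset set_append subset_trans)
    have "prodseq q1 q2 f (Xs1 @ Xs2) = star q1 q2 (X - Y) Y (prodseq q1 q2 f Xs1) (prodseq q1 q2 f Xs2)"
      using prodseq_append[OF A1(2) _ fin] A1(3) A2(3) by auto
    also have "\<dots> = f" using Y(4) e A1(4) A2(4) by simp
    finally have "good_decomp q1 q2 X f (Xs1 @ Xs2)"
      unfolding good_decomp_alt using A1 A2 Y(1) pd_append[OF A1(2) A2(2)] by auto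
    then show ?thesis by blast
  qed
qed


lemma in_Union_nth: "x \<in> \<Union>(set Xs) \<Longrightarrow> \<exists>k<length Xs. x \<in> Xs ! k"
  by (auto simp: in_set_conv_nth)

lemma block_contained:
  assumes f0: "f {} = 0" and gX: "good_decomp q1 q2 X f Xs" and gY: "good_decomp q1 q2 X f Ys"
    and B: "B \<in> set Ys"
  shows "\<exists>Z\<in>set Xs. B \<subseteq> Z"
proof -
  have X: "\<forall>Z\<in>set Xs. Z \<noteq> {} \<and> Z \<subseteq> X \<and> indecomposable q1 q2 Z (restr f Z)" "pd Xs"
    "\<Union>(set Xs) = X" "f = prodseq q1 q2 f Xs" using gX unfolding good_decomp_alt by auto
  have Yp: "B \<noteq> {}" "B \<subseteq> X" "indecomposable q1 q2 B (restr f B)" using gY B unfolding good_decomp_alt by auto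
  obtain x where x: "x \<in> B" using Yp by blast
  then have "x \<in> \<Union>(set Xs)" using Yp X(3) by blast
  from in_Union_nth[OF this] obtain k where k: "k < length Xs" "x \<in> Xs ! k" by blast
  define P where "P = (\<lambda>i. i < length Xs \<and> Xs ! i \<inter> B \<noteq> {})"
  have Pk: "P k" using k x P_def by blast
  define i where "i = (LEAST i. P i)"
  have Pi: "P i" using LeastI[of P, OF Pk] i_def by simp
  have notP: "\<And>j. j < i \<Longrightarrow> \<not> P j" using not_less_Least i_def by blast
  have il: "i < length Xs" using Pi P_def by simp
  have Bsub: "B \<subseteq> \<Union>(set (drop i Xs))"
  proof
    fix y assume y: "y \<in> B"
    then have "y \<in> \<Union>(set Xs)" using Yp X(3) by blast
    from in_Union_nth[OF this] obtain j where j: "j < length Xs" "y \<in> Xs ! j" by blast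
    then have "P j" using y P_def by blast
    then have "i \<le> j" using notP by (meson not_le)
    then have "Xs ! j = drop i Xs ! (j - i)" "j - i < length (drop i Xs)" using j by auto
    then have "Xs ! j \<in> set (drop i Xs)" by (metis nth_mem)
    then show "y \<in> \<Union>(set (drop i Xs))" using j by blast
  qed
  define R where "R = \<Union>(set (drop (Suc i) Xs))"
  have dr: "drop i Xs = Xs ! i # drop (Suc i) Xs" using il by (simp add: Cons_nth_drop_Suc)
  have pdi: "pd (Xs ! i # drop (Suc i) Xs)" using pd_drop[OF X(2), of i] dr by simp
  have disj: "Xs ! i \<inter> R = {}" using pdi R_def by (simp add: pd_Cons)
  have BiR: "B \<subseteq> Xs ! i \<union> R" using Bsub dr R_def by simp
  define S where "S = B \<inter> Xs ! i"
  define T where "T = B - Xs ! i"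
  have ST: "B - T = S" "S \<union> T = B" using S_def T_def by auto
  have eq: "restr f B = star q1 q2 (B - T) T (restr f (B - T)) (restr f T)"
  proof
    fix A show "restr f B A = star q1 q2 (B - T) T (restr f (B - T)) (restr f T) A"
    proof (cases "A \<subseteq> B")
      case True
      have AR: "A \<inter> R \<subseteq> \<Union>(set (drop (Suc i) Xs))" using R_def by blast
      have i1: "A \<inter> Xs ! i = A \<inter> S" "A \<inter> R = A \<inter> T" using True BiR disj S_def T_def by blast+
      have "f A = prodseq q1 q2 f Xs A" using X(4) by metis
      also have "\<dots> = prodseq q1 q2 f (drop i Xs) A"
        using prodseq_drop[where f=f, OF f0 X(2)] True Bsub by blast
      also have "\<dots> = star q1 q2 (Xs ! i) R (restr f (Xs ! i)) (prodseq q1 q2 f (drop (Suc i) Xs)) A"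
        unfolding dr R_def by simp
      also have "\<dots> = q1 ^ card (A \<inter> R) * f (A \<inter> Xs ! i) + q2 ^ card (A \<inter> Xs ! i) * prodseq q1 q2 f (drop (Suc i) Xs) (A \<inter> R)"
      proof -
        have "A \<subseteq> Xs ! i \<union> R" using True BiR by blast
        then show ?thesis by (simp add: star_def restr_def)
      qed
      also have "prodseq q1 q2 f (drop (Suc i) Xs) (A \<inter> R) = prodseq q1 q2 f Xs (A \<inter> R)"
        using prodseq_drop[where f=f, OF f0 X(2) AR] by simp
      also have "\<dots> = f (A \<inter> R)" using X(4) by metis
      finally have fA: "f A = q1 ^ card (A \<inter> T) * f (A \<inter> S) + q2 ^ card (A \<inter> S) * f (A \<inter> T)"
        unfolding i1 .
      have "A \<subseteq> (B - T) \<union> T" using True T_def by blast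
      then show ?thesis using True fA unfolding ST(1) by (simp add: star_def restr_def)
    next
      case False
      then have "\<not> A \<subseteq> (B - T) \<union> T" using T_def by blast
      then show ?thesis using False by (simp add: star_def restr_def)
    qed
  qed
  have "T = {} \<or> T = B"
    using Yp(3) unfolding indecomposable_def
    using eq restr_Bool[where f=f, OF f0] T_def by blast
  moreover have "T \<noteq> B" using Pi P_def T_def by blast
  ultimately have "B \<subseteq> Xs ! i" using T_def by blast
  then show ?thesis using il nth_mem by blast
qed

lemma pd_distinct:
  assumes "pd Xs" "\<forall>Z\<in>set Xs. Z \<noteq> {}" shows "distinct Xs"
  unfolding distinct_conv_nth
proof (intro allI impI)
  fix i j assume "i < length Xs" "j < length Xs" "i \<noteq> j"
  then have "Xs ! i \<inter> Xs ! j = {}" "Xs ! i \<noteq> {}" using assms unfolding pd_def by auto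
  then show "Xs ! i \<noteq> Xs ! j" by auto
qed

lemma same_sets:
  assumes f0: "f {} = 0" and gX: "good_decomp q1 q2 X f Xs" and gY: "good_decomp q1 q2 X f Ys"
  shows "set Ys \<subseteq> set Xs"
proof
  fix B assume B: "B \<in> set Ys"
  obtain Z where Z: "Z \<in> set Xs" "B \<subseteq> Z" using block_contained[OF f0 gX gY B] by blast
  obtain B' where B': "B' \<in> set Ys" "Z \<subseteq> B'" using block_contained[OF f0 gY gX Z(1)] by blast
  have ne: "B \<noteq> {}" "pd Ys" using gY B unfolding good_decomp_alt by auto
  have "B = B'"
  proof (rule ccontr)
    assume "B \<noteq> B'"
    then have "B \<inter> B' = {}" using pd_disj[OF ne(2) B B'(1)] by simp
    then show False using ne Z B' by blast
  qed
  then have ZB: "Z \<subseteq> B" using B'(2) by simp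
  have "B = Z" by (rule equalityI[OF Z(2) ZB])
  then show "B \<in> set Xs" using Z by simp
qed

theorem lemma2p7:
  fixes q1 q2 :: int and X :: "'a set" and f :: "'a set \<Rightarrow> int"
  assumes "finite X" and "X \<noteq> {}" and "f \<in> Bool X"
  shows "\<exists>Xs. good_decomp q1 q2 X f Xs \<and>
           (\<forall>Ys. good_decomp q1 q2 X f Ys \<longrightarrow>
              length Ys = length Xs \<and>
              (\<exists>\<sigma>. bij_betw \<sigma> {..<length Xs} {..<length Xs} \<and>
                   (\<forall>i<length Xs. Ys ! i = Xs ! (\<sigma> i))))"
proof -
  have f0: "f {} = 0" using assms(3) by (simp add: Bool_def)
  obtain Xs where gX: "good_decomp q1 q2 X f Xs" using existence[OF assms] by blast
  have "length Ys = length Xs \<and>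
        (\<exists>\<sigma>. bij_betw \<sigma> {..<length Xs} {..<length Xs} \<and> (\<forall>i<length Xs. Ys ! i = Xs ! (\<sigma> i)))"
    if gY: "good_decomp q1 q2 X f Ys" for Ys
  proof -
    have eqs: "set Ys = set Xs" using same_sets[OF f0 gX gY] same_sets[OF f0 gY gX] by blast
    have dX: "distinct Xs" using gX pd_distinct unfolding good_decomp_alt by blast
    have dY: "distinct Ys" using gY pd_distinct unfolding good_decomp_alt by blast
    have len: "length Ys = length Xs" using distinct_card[OF dX] distinct_card[OF dY] eqs by simp
    define \<sigma> where "\<sigma> = (\<lambda>j. SOME i. i < length Xs \<and> Xs ! i = Ys ! j)"
    have s: "\<sigma> j < length Xs \<and> Xs ! (\<sigma> j) = Ys ! j" if "j < length Xs" for j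
    proof -
      have "Ys ! j \<in> set Xs" using that len eqs nth_mem by (metis)
      then have "\<exists>i. i < length Xs \<and> Xs ! i = Ys ! j" by (simp add: in_set_conv_nth)
      then show ?thesis unfolding \<sigma>_def by (rule someI_ex)
    qed
    have inj: "inj_on \<sigma> {..<length Xs}"
    proof (rule inj_onI)
      fix a b assume ab: "a \<in> {..<length Xs}" "b \<in> {..<length Xs}" "\<sigma> a = \<sigma> b"
      then have "Ys ! a = Ys ! b" using s by (metis lessThan_iff)
      then show "a = b" using dY ab len nth_eq_iff_index_eq by (metis lessThan_iff)
    qed
    have img: "\<sigma> ` {..<length Xs} \<subseteq> {..<length Xs}" using s by auto
    have "bij_betw \<sigma> {..<length Xs} {..<length Xs}"
      unfolding bij_betw_def using inj endo_inj_surj[OF _ img inj] by simp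
    then show ?thesis using len s by metis
  qed
  then show ?thesis using gX by blast
qed

end
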